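(* Assume $\kappa=\kappa^{<\kappa}$. Every point of $S_\kappa$ is a strong butterfly point: for every $x\in S_\kappa$ there are disjoint open sets $A,B\subseteq S_\kappa$ with $A\cup B=S_\kappa\setminus\{x\}$ and $\overline{A}\cap\overline{B}=\{x\}$.
   Context: A space is zero-dimensional if it has a base of clopen sets. For a zero-dimensional space $X$ and an open $U\subseteq X$, the ($X$-)type $\tau(U)$ is the least cardinal $\tau$ such that $U$ is a union of $\tau$ many clopen subsets of $X$. A zero-dimensional space is an $F_\kappa$-space if every open subset of type less than $\kappa$ is $C^*$-embedded (every bounded continuous real-valued function on it extends continuously to the whole space). A space is a $G_\kappa$-space if every non-empty intersection of fewer than $\kappa$ open sets has non-empty interior. A $\kappa$-Parovičenko space is a compact Hausdorff zero-dimensional $F_\kappa$- and $G_\kappa$-space without isolated points (no weight restriction is imposed). If $\kappa=\kappa^{<\kappa}$ there is, up to homeomorphism, a unique $\kappa$-Parovičenko space of weight $\kappa$; it is denoted $S_\kappa$ (under CH, $S_{\omega_1}\cong\omega^*=\beta\omega\setminus\omega$). A point $x$ of a Hausdorff space $X$ is a strong butterfly point if $X\setminus\{x\}$ can be partitioned into open sets $A,B$ (the wings) with $\overline{A}\cap\overline{B}=\{x\}$. *)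

theory Defs
  imports "HOL-Analysis.Analysis"
begin

definition card_le :: "'a set \<Rightarrow> 'b set \<Rightarrow> bool" where
  "card_le A B \<longleftrightarrow> ordLeq2 (card_of A) (card_of B)"

definition card_lt :: "'a set \<Rightarrow> 'b set \<Rightarrow> bool" where
  "card_lt A B \<longleftrightarrow> ordLess2 (card_of A) (card_of B)"

definition card_eq :: "'a set \<Rightarrow> 'b set \<Rightarrow> bool" where
  "card_eq A B \<longleftrightarrow> ordIso2 (card_of A) (card_of B)"

text \<open>kappa = kappa^{<kappa}, kappa represented by (the cardinality of) a set K:
  for every cardinal lambda < kappa (represented by a subset S of K), kappa^lambda <= kappa.\<close>
definition kappa_eq_kappa_less_kappa :: "'k set \<Rightarrow> bool" where
  "kappa_eq_kappa_less_kappa K \<longleftrightarrow>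
     (\<forall>S. S \<subseteq> K \<longrightarrow> card_lt S K \<longrightarrow> card_le (Func S K) K)"

definition clopenin :: "'a topology \<Rightarrow> 'a set \<Rightarrow> bool" where
  "clopenin X C \<longleftrightarrow> openin X C \<and> closedin X C"

definition zero_dimensional :: "'a topology \<Rightarrow> bool" where
  "zero_dimensional X \<longleftrightarrow>
     (\<forall>U x. openin X U \<and> x \<in> U \<longrightarrow> (\<exists>C. clopenin X C \<and> x \<in> C \<and> C \<subseteq> U))"

definition type_less :: "'a topology \<Rightarrow> 'a set \<Rightarrow> 'k set \<Rightarrow> bool" where
  "type_less X U K \<longleftrightarrow>
     (\<exists>F. (\<forall>C\<in>F. clopenin X C) \<and> \<Union>F = U \<and> card_lt F K)"

definition C_star_embedded :: "'a topology \<Rightarrow> 'a set \<Rightarrow> bool" where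
  "C_star_embedded X U \<longleftrightarrow>
     (\<forall>f. continuous_map (subtopology X U) euclideanreal f \<and> bounded (f ` U) \<longrightarrow>
        (\<exists>g. continuous_map X euclideanreal g \<and> (\<forall>x\<in>U. g x = f x)))"

definition F_kappa_space :: "'a topology \<Rightarrow> 'k set \<Rightarrow> bool" where
  "F_kappa_space X K \<longleftrightarrow> zero_dimensional X \<and>
     (\<forall>U. openin X U \<and> type_less X U K \<longrightarrow> C_star_embedded X U)"

definition G_kappa_space :: "'a topology \<Rightarrow> 'k set \<Rightarrow> bool" where
  "G_kappa_space X K \<longleftrightarrow>
     (\<forall>F. (\<forall>V\<in>F. openin X V) \<and> card_lt F K \<and> topspace X \<inter> \<Inter>F \<noteq> {} \<longrightarrow>
        X interior_of (topspace X \<inter> \<Inter>F) \<noteq> {})"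

definition kappa_Parovicenko :: "'a topology \<Rightarrow> 'k set \<Rightarrow> bool" where
  "kappa_Parovicenko X K \<longleftrightarrow>
     compact_space X \<and> Hausdorff_space X \<and> zero_dimensional X \<and>
     F_kappa_space X K \<and> G_kappa_space X K \<and>
     (\<forall>x\<in>topspace X. \<not> openin X {x})"

definition is_base :: "'a topology \<Rightarrow> 'a set set \<Rightarrow> bool" where
  "is_base X B \<longleftrightarrow> (\<forall>V\<in>B. openin X V) \<and>
     (\<forall>U. openin X U \<longrightarrow> (\<exists>F. F \<subseteq> B \<and> \<Union>F = U))"

definition weight_eq :: "'a topology \<Rightarrow> 'k set \<Rightarrow> bool" where
  "weight_eq X K \<longleftrightarrow> (\<exists>B. is_base X B \<and> card_eq B K) \<and>
     (\<forall>B. is_base X B \<longrightarrow> card_le K B)"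

definition strong_butterfly_point :: "'a topology \<Rightarrow> 'a \<Rightarrow> bool" where
  "strong_butterfly_point X x \<longleftrightarrow>
     (\<exists>A B. openin X A \<and> openin X B \<and> A \<inter> B = {} \<and> A \<union> B = topspace X - {x} \<and>
        X closure_of A \<inter> X closure_of B = {x})"

end

theory Submission
  imports Defs
begin
unbundle cardinal_syntax


lemma lists_card_le:
  assumes inf: "infinite B"
  shows "|lists B| \<le>o |B|"
proof -
  have ne: "B \<noteq> {}" using inf by auto
  have len: "|{l \<in> lists B. length l = n}| \<le>o |B|" for n
  proof (induction n)
    case 0
    have "{l \<in> lists B. length l = 0} = {[]}" by auto
    then show ?case using card_of_singl_ordLeq[OF ne] by simp
  next
    case (Suc n)
    let ?S = "{l \<in> lists B. length l = n}"
    have sub: "{l \<in> lists B. length l = Suc n} \<subseteq> (\<lambda>(b,l). b#l) ` (B \<times> ?S)"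
    proof
      fix l assume "l \<in> {l \<in> lists B. length l = Suc n}"
      then obtain b t where "l = b#t" "b \<in> B" "t \<in> ?S" by (cases l) auto
      then show "l \<in> (\<lambda>(b,l). b#l) ` (B \<times> ?S)" by force
    qed
    have "|B \<times> ?S| \<le>o |B|"
      using card_of_Sigma_ordLeq_infinite[OF inf, of B "\<lambda>_. ?S"] Suc
        ordIso_imp_ordLeq[OF card_of_refl[of B]] by simp
    then show ?case
      using ordLeq_transitive[OF card_of_mono1[OF sub] ordLeq_transitive[OF card_of_image]] by blast
  qed
  have "lists B = (\<Union>n\<in>(UNIV::nat set). {l \<in> lists B. length l = n})" by auto
  moreover have "|\<Union>n\<in>(UNIV::nat set). {l \<in> lists B. length l = n}| \<le>o |B|"
    by (rule card_of_UNION_ordLeq_infinite[OF inf]) (use len infinite_iff_card_of_nat inf in auto)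
  ultimately show ?thesis by simp
qed

lemma clopen_sep:
  assumes cs: "compact_space X" and zd: "zero_dimensional X"
    and c1: "closedin X C1" and c2: "closedin X C2" and dj: "C1 \<inter> C2 = {}"
  shows "\<exists>E. clopenin X E \<and> C1 \<subseteq> E \<and> E \<inter> C2 = {}"
proof -
  have "\<forall>p\<in>C1. \<exists>c. clopenin X c \<and> p \<in> c \<and> c \<subseteq> topspace X - C2"
  proof
    fix p assume p: "p \<in> C1"
    have "openin X (topspace X - C2)" using c2 by blast
    moreover have "p \<in> topspace X - C2" using p dj closedin_subset[OF c1] by auto
    ultimately show "\<exists>c. clopenin X c \<and> p \<in> c \<and> c \<subseteq> topspace X - C2"
      using zd unfolding zero_dimensional_def by blast
  qed
  then obtain c where c: "\<And>p. p \<in> C1 \<Longrightarrow> clopenin X (c p) \<and> p \<in> c p \<and> c p \<subseteq> topspace X - C2"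
    by metis
  have "compactin X C1" using closedin_compact_space[OF cs c1] .
  moreover have "\<forall>U\<in>c ` C1. openin X U" using c clopenin_def by auto
  moreover have "C1 \<subseteq> \<Union>(c ` C1)" using c by auto
  ultimately obtain F where F: "finite F" "F \<subseteq> c ` C1" "C1 \<subseteq> \<Union>F"
    unfolding compactin_def by metis
  have "clopenin X (\<Union>F)" unfolding clopenin_def
  proof
    show "openin X (\<Union>F)" using F c unfolding clopenin_def by (intro openin_Union) blast
    show "closedin X (\<Union>F)" using F c unfolding clopenin_def by (intro closedin_Union) blast+
  qed
  moreover have "\<Union>F \<inter> C2 = {}" using F c by blast
  ultimately show ?thesis using F by blast
qed



lemma Fk_sep:
  assumes FK: "F_kappa_space X K" and oU: "openin X U" and oV: "openin X V"
    and dj: "U \<inter> V = {}" and cl: "\<forall>C\<in>F. clopenin X C" and un: "\<Union>F = U \<union> V"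
    and lt: "card_lt F K"
  shows "X closure_of U \<inter> X closure_of V = {}"
proof -
  have oUV: "openin X (U \<union> V)" using oU oV by blast
  have "type_less X (U \<union> V) K" unfolding type_less_def using cl un lt by blast
  hence cs: "C_star_embedded X (U \<union> V)" using FK oUV unfolding F_kappa_space_def by blast
  define f where "f = (\<lambda>z. if z \<in> V then 1 else (0::real))"
  have UVsub: "U \<union> V \<subseteq> topspace X" using oUV openin_subset by blast
  have cont: "continuous_map (subtopology X (U \<union> V)) euclideanreal f"
    unfolding continuous_map_def
  proof (intro conjI allI impI)
    show "f \<in> topspace (subtopology X (U \<union> V)) \<rightarrow> topspace euclideanreal" by simp
    fix T :: "real set" assume "openin euclideanreal T"
    have eq: "{z \<in> topspace (subtopology X (U \<union> V)). f z \<in> T} =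
       (if (1::real) \<in> T then V else {}) \<union> (if (0::real) \<in> T then U else {})"
      using UVsub dj by (auto simp: f_def)
    have "openin X ((if (1::real) \<in> T then V else {}) \<union> (if (0::real) \<in> T then U else {}))"
      using oU oV by auto
    moreover have "(if (1::real) \<in> T then V else {}) \<union> (if (0::real) \<in> T then U else {}) \<subseteq> U \<union> V"
      by auto
    ultimately show "openin (subtopology X (U \<union> V)) {z \<in> topspace (subtopology X (U \<union> V)). f z \<in> T}"
      unfolding eq openin_subtopology by blast
  qed
  have "bounded (f ` (U \<union> V))"
    by (rule bounded_subset[of "{0,1}"]) (auto simp: f_def)
  then obtain g where g: "continuous_map X euclideanreal g" "\<forall>z\<in>U \<union> V. g z = f z"
    using cs cont unfolding C_star_embedded_def by blast
  have c0: "closedin X {z \<in> topspace X. g z \<in> {0}}"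
    by (rule closedin_continuous_map_preimage[OF g(1)]) simp
  have c1: "closedin X {z \<in> topspace X. g z \<in> {1}}"
    by (rule closedin_continuous_map_preimage[OF g(1)]) simp
  have "X closure_of U \<subseteq> {z \<in> topspace X. g z \<in> {0}}"
    by (rule closure_of_minimal[OF _ c0]) (use g(2) UVsub dj in \<open>auto simp: f_def\<close>)
  moreover have "X closure_of V \<subseteq> {z \<in> topspace X. g z \<in> {1}}"
    by (rule closure_of_minimal[OF _ c1]) (use g(2) UVsub dj in \<open>auto simp: f_def\<close>)
  ultimately show ?thesis by fastforce
qed

lemma Gk_main:
  assumes GK: "G_kappa_space X K" and H: "Hausdorff_space X" and zd: "zero_dimensional X"
    and noiso: "\<forall>y\<in>topspace X. \<not> openin X {y}"
    and c: "clopenin X c" and xc: "x \<in> c"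
    and cl: "\<forall>C\<in>F. clopenin X C" and xF: "x \<notin> \<Union>F" and lt: "card_lt F K"
  shows "\<exists>P. clopenin X P \<and> P \<noteq> {} \<and> P \<subseteq> c - X closure_of (\<Union>F) - {x}"
proof -
  let ?W = "\<Union>F"
  have oc: "openin X c" and ccl: "closedin X c" using c unfolding clopenin_def by auto
  have xt: "x \<in> topspace X" using oc xc openin_subset by blast
  have cx: "closedin X {x}" using Hausdorff_imp_t1_space[OF H, unfolded t1_space_closedin_singleton] xt by blast
  have oO: "openin X (c - X closure_of ?W - {x})"
    using oc cx by (intro openin_diff) auto
  have "c - X closure_of ?W - {x} \<noteq> {}"
  proof
    assume E: "c - X closure_of ?W - {x} = {}"
    have xcl: "x \<in> X closure_of (c - {x})"
      unfolding in_closure_of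
    proof (intro conjI allI impI)
      show "x \<in> topspace X" by fact
      fix T assume T: "x \<in> T \<and> openin X T"
      have "openin X (T \<inter> c)" using T oc by blast
      hence "T \<inter> c \<noteq> {x}" using noiso xt by auto
      then obtain y where "y \<in> T \<inter> c" "y \<noteq> x" using T xc by blast
      thus "\<exists>y. y \<in> c - {x} \<and> y \<in> T" by blast
    qed
    have "c - {x} \<subseteq> X closure_of ?W" using E by blast
    hence "X closure_of (c - {x}) \<subseteq> X closure_of ?W"
      using closure_of_minimal[OF _ closedin_closure_of] by blast
    with xcl have "x \<in> X closure_of ?W" by blast
    hence csub: "c \<subseteq> X closure_of ?W" using E by blast
    have Fne: "F \<noteq> {}" using csub xc by auto
    let ?G = "(\<lambda>f. c - f) ` F"
    have "\<forall>V\<in>?G. openin X V" using cl oc unfolding clopenin_def by blast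
    moreover have "card_lt ?G K"
      unfolding card_lt_def by (rule ordLeq_ordLess_trans[OF card_of_image lt[unfolded card_lt_def]])
    moreover have GI: "topspace X \<inter> \<Inter>?G = c - ?W" using Fne openin_subset[OF oc] by auto
    moreover have "topspace X \<inter> \<Inter>?G \<noteq> {}" using GI xc xF by blast
    ultimately have "X interior_of (topspace X \<inter> \<Inter>?G) \<noteq> {}"
      using GK[unfolded G_kappa_space_def, rule_format, of ?G] by blast
    then obtain z where z: "z \<in> X interior_of (c - ?W)" using GI by auto
    let ?I = "X interior_of (c - ?W)"
    have "?I \<subseteq> c - ?W" by (rule interior_of_subset)
    hence "?I \<inter> ?W = {}" by blast
    hence "?I \<inter> X closure_of ?W = {}"
      using openin_Int_closure_of_eq_empty[OF openin_interior_of[of X "c - ?W"], of ?W] by simp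
    moreover have "z \<in> X closure_of ?W" using z csub \<open>?I \<subseteq> c - ?W\<close> by blast
    ultimately show False using z by blast
  qed
  then obtain p where p: "p \<in> c - X closure_of ?W - {x}" by blast
  then obtain P where "clopenin X P" "p \<in> P" "P \<subseteq> c - X closure_of ?W - {x}"
    using zd oO unfolding zero_dimensional_def by blast
  thus ?thesis by blast
qed



theorem lemma4p1:
  fixes K :: "'k set" and X :: "'a topology" and x :: 'a
  assumes "infinite K"
    and "kappa_eq_kappa_less_kappa K"
    and "kappa_Parovicenko X K"
    and "weight_eq X K"
    and "x \<in> topspace X"
  shows "strong_butterfly_point X x"
proof -
  note infK = assms(1) and xt = assms(5)
  have cs: "compact_space X" and H: "Hausdorff_space X" and zd: "zero_dimensional X"
    and FK: "F_kappa_space X K" and GK: "G_kappa_space X K"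
    and noiso: "\<forall>y\<in>topspace X. \<not> openin X {y}"
    using assms(3) unfolding kappa_Parovicenko_def by auto
  obtain \<B> where B: "is_base X \<B>" "card_eq \<B> K" using assms(4) unfolding weight_eq_def by blast
  have BK: "|\<B>| =o |K|" using B(2) unfolding card_eq_def .
  have infB: "infinite \<B>" using card_of_ordIso_finite[OF BK] infK by simp
  define Clop where "Clop = {c. clopenin X c}"
  have Clop_sub: "Clop \<subseteq> (\<lambda>l. \<Union>(set l)) ` lists \<B>"
  proof
    fix c assume "c \<in> Clop"
    hence cc: "clopenin X c" by (simp add: Clop_def)
    obtain F where F: "F \<subseteq> \<B>" "\<Union>F = c"
      using B(1) cc unfolding is_base_def clopenin_def by blast
    have "compactin X c" using closedin_compact_space[OF cs] cc unfolding clopenin_def by blast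
    moreover have "\<forall>U\<in>F. openin X U" using F B(1) unfolding is_base_def by blast
    ultimately obtain F' where F': "finite F'" "F' \<subseteq> F" "c \<subseteq> \<Union>F'"
      using F unfolding compactin_def by (metis order_refl)
    obtain l where l: "set l = F'" using finite_list[OF F'(1)] by blast
    have "\<Union>(set l) = c" using l F F' by blast
    moreover have "l \<in> lists \<B>" using l F' F by auto
    ultimately show "c \<in> (\<lambda>l. \<Union>(set l)) ` lists \<B>" by blast
  qed
  have "|Clop| \<le>o |K|"
    using ordLeq_transitive[OF card_of_mono1[OF Clop_sub]
          ordLeq_transitive[OF card_of_image ordLeq_transitive[OF lists_card_le[OF infB] ordIso_imp_ordLeq[OF BK]]]] .
  moreover have "Clop \<noteq> {}" unfolding Clop_def clopenin_def by (metis closedin_empty openin_empty mem_Collect_eq empty_iff)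
  ultimately obtain e where e: "e ` K = Clop" using card_of_ordLeq2[of Clop K] by auto
  have eclop: "k \<in> K \<Longrightarrow> clopenin X (e k)" for k using e Clop_def by auto
  define r where "r = |K|"
  have wo: "well_order_on K r" unfolding r_def by (rule card_of_well_order_on)
  define R where "R = r - Id"
  have wfR: "wf R" using wo unfolding R_def well_order_on_def by blast
  have tot: "\<And>j k. j \<in> K \<Longrightarrow> k \<in> K \<Longrightarrow> j \<noteq> k \<Longrightarrow> (j,k) \<in> R \<or> (k,j) \<in> R"
    using wo unfolding R_def well_order_on_def linear_order_on_def total_on_def by blast
  have RK: "(j,k) \<in> R \<Longrightarrow> j \<in> K" for j k
    using well_order_on_domain[OF wo] unfolding R_def by blast
  have small: "card_lt (g ` {j. (j,k) \<in> R}) K" if "k \<in> K" for g :: "'k \<Rightarrow> 'a set" and k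
  proof -
    have eq: "{j. (j,k) \<in> R} = underS r k" unfolding R_def underS_def by auto
    have "|underS r k| <o r"
      using card_of_underS[of r k] card_of_Card_order that unfolding r_def Field_card_of by blast
    thus ?thesis unfolding card_lt_def eq r_def using card_of_image ordLeq_ordLess_trans by blast
  qed
  define cand where "cand = (\<lambda>U V pq. clopenin X (fst pq) \<and> clopenin X (snd pq) \<and>
      x \<notin> fst pq \<and> x \<notin> snd pq \<and> fst pq \<inter> X closure_of V = {} \<and>
      snd pq \<inter> X closure_of U = {} \<and> fst pq \<inter> snd pq = {})"
  define goal :: "'k \<Rightarrow> 'a set \<times> 'a set \<Rightarrow> bool" where "goal = (\<lambda>k pq. (x \<notin> e k \<longrightarrow> e k \<subseteq> fst pq \<union> snd pq) \<and>
      (x \<in> e k \<longrightarrow> fst pq \<inter> e k \<noteq> {} \<and> snd pq \<inter> e k \<noteq> {}))"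
  define UU :: "('k \<Rightarrow> 'a set \<times> 'a set) \<Rightarrow> 'k \<Rightarrow> 'a set" where "UU = (\<lambda>g k. \<Union>{fst (g j) |j. (j,k) \<in> R})"
  define VV :: "('k \<Rightarrow> 'a set \<times> 'a set) \<Rightarrow> 'k \<Rightarrow> 'a set" where "VV = (\<lambda>g k. \<Union>{snd (g j) |j. (j,k) \<in> R})"
  define step :: "('k \<Rightarrow> 'a set \<times> 'a set) \<Rightarrow> 'k \<Rightarrow> 'a set \<times> 'a set" where
    "step = (\<lambda>g k. if \<exists>pq. cand (UU g k) (VV g k) pq \<and> goal k pq
      then (SOME pq. cand (UU g k) (VV g k) pq \<and> goal k pq) else ({},{}))"
  define h where "h = wfrec R step"
  have hk: "h k = step h k" for k
  proof -
    have "h k = step (cut h R k) k" unfolding h_def by (rule wfrec[OF wfR])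
    moreover have e1: "UU (cut h R k) k = UU h k" and e2: "VV (cut h R k) k = VV h k"
      unfolding UU_def VV_def by (auto simp: cut_apply)
    ultimately show ?thesis unfolding step_def by (simp only: e1 e2)
  qed
  have hc: "cand (UU h k) (VV h k) (h k)" for k
  proof (cases "\<exists>pq. cand (UU h k) (VV h k) pq \<and> goal k pq")
    case True
    then show ?thesis using someI_ex[OF True] hk unfolding step_def by auto
  next
    case False
    then show ?thesis using hk unfolding step_def cand_def clopenin_def by auto
  qed
  have hgoal: "goal k (h k)" if "\<exists>pq. cand (UU h k) (VV h k) pq \<and> goal k pq" for k
    using someI_ex[OF that] hk that unfolding step_def by auto
  have piece_clop: "clopenin X (fst (h k))" "clopenin X (snd (h k))"
     "x \<notin> fst (h k)" "x \<notin> snd (h k)" for k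
    using hc[of k] unfolding cand_def by auto
  have piece_top: "fst (h k) \<subseteq> topspace X" "snd (h k) \<subseteq> topspace X" for k
    using piece_clop(1,2)[of k] unfolding clopenin_def by (auto dest: openin_subset)
  have UUtop: "UU h k \<subseteq> topspace X" "VV h k \<subseteq> topspace X" for k
    unfolding UU_def VV_def using piece_top by blast+
  have disj: "fst (h j) \<inter> snd (h k) = {}" if jkK: "j \<in> K" "k \<in> K" for j k
  proof (cases "j = k")
    case True then show ?thesis using hc[of k] unfolding cand_def by auto
  next
    case False
    then consider "(j,k) \<in> R" | "(k,j) \<in> R" using tot jkK by blast
    then show ?thesis
    proof cases
      case 1
      have "fst (h j) \<subseteq> UU h k" unfolding UU_def using 1 by blast
      hence "fst (h j) \<subseteq> X closure_of UU h k" using closure_of_subset[OF UUtop(1)] by blast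
      then show ?thesis using hc[of k] unfolding cand_def by auto
    next
      case 2
      have "snd (h k) \<subseteq> VV h j" unfolding VV_def using 2 by blast
      hence "snd (h k) \<subseteq> X closure_of VV h j" using closure_of_subset[OF UUtop(2)] by blast
      then show ?thesis using hc[of j] unfolding cand_def by auto
    qed
  qed
  have exist: "\<exists>pq. cand (UU h k) (VV h k) pq \<and> goal k pq" if kK: "k \<in> K" for k
  proof -
    let ?J = "{j. (j,k) \<in> R}"
    let ?FA = "(\<lambda>j. fst (h j)) ` ?J" and ?FB = "(\<lambda>j. snd (h j)) ` ?J"
    let ?F = "(\<lambda>j. fst (h j) \<union> snd (h j)) ` ?J"
    let ?U = "UU h k" and ?V = "VV h k"
    have U: "?U = \<Union>?FA" and V: "?V = \<Union>?FB" unfolding UU_def VV_def by blast+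
    have oU: "openin X ?U" unfolding U by (intro openin_Union) (use piece_clop in \<open>auto simp: clopenin_def\<close>)
    have oV: "openin X ?V" unfolding V by (intro openin_Union) (use piece_clop in \<open>auto simp: clopenin_def\<close>)
    have djUV: "?U \<inter> ?V = {}" unfolding U V using disj RK by blast
    have xU: "x \<notin> ?U" "x \<notin> ?V" unfolding U V using piece_clop by auto
    have clF: "\<forall>C\<in>?F. clopenin X C" using piece_clop unfolding clopenin_def by (auto intro: openin_Un closedin_Un)
    have sep: "X closure_of ?U \<inter> X closure_of ?V = {}"
      by (rule Fk_sep[OF FK oU oV djUV clF _ small[OF kK]]) (auto simp: U V)
    have ek: "clopenin X (e k)" using eclop kK .
    show ?thesis
    proof (cases "x \<in> e k")
      case False
      obtain E where E: "clopenin X E" "e k \<inter> X closure_of ?U \<subseteq> E" "E \<inter> (e k \<inter> X closure_of ?V) = {}"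
      proof -
        have c1: "closedin X (e k \<inter> X closure_of ?U)" using ek unfolding clopenin_def by (intro closedin_Int) auto
        have c2: "closedin X (e k \<inter> X closure_of ?V)" using ek unfolding clopenin_def by (intro closedin_Int) auto
        have d: "(e k \<inter> X closure_of ?U) \<inter> (e k \<inter> X closure_of ?V) = {}" using sep by blast
        show ?thesis using clopen_sep[OF cs zd c1 c2 d] that by blast
      qed
      let ?pq = "(e k \<inter> E, e k - E)"
      have "cand ?U ?V ?pq" unfolding cand_def using E ek False
        unfolding clopenin_def by (auto intro: openin_Int closedin_Int openin_diff closedin_diff)
      moreover have "goal k ?pq" unfolding goal_def using False by auto
      ultimately show ?thesis by blast
    next
      case True
      have clB: "\<forall>C\<in>?FB. clopenin X C" using piece_clop by blast
      have clA: "\<forall>C\<in>?FA. clopenin X C" using piece_clop by blast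
      obtain P where P: "clopenin X P" "P \<noteq> {}" "P \<subseteq> e k - X closure_of ?V - {x}"
        using Gk_main[OF GK H zd noiso ek True clB _ small[OF kK]] xU V by auto
      have ek': "clopenin X (e k - P)" using ek P(1) unfolding clopenin_def
        by (auto intro: openin_diff closedin_diff)
      obtain Q where Q: "clopenin X Q" "Q \<noteq> {}" "Q \<subseteq> (e k - P) - X closure_of ?U - {x}"
      proof -
        have xP: "x \<in> e k - P" using P True by blast
        have xFA: "x \<notin> \<Union>?FA" using xU(1) U by simp
        show ?thesis using Gk_main[OF GK H zd noiso ek' xP clA xFA small[OF kK]] U that by auto
      qed
      let ?pq = "(P, Q)"
      have "cand ?U ?V ?pq" unfolding cand_def using P Q by auto
      moreover have "goal k ?pq" unfolding goal_def using P Q True by auto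
      ultimately show ?thesis by blast
    qed
  qed
  define A where "A = (\<Union>k\<in>K. fst (h k))"
  define B' where "B' = (\<Union>k\<in>K. snd (h k))"
  have oA: "openin X A" unfolding A_def by (intro openin_Union) (use piece_clop in \<open>auto simp: clopenin_def\<close>)
  have oB: "openin X B'" unfolding B'_def by (intro openin_Union) (use piece_clop in \<open>auto simp: clopenin_def\<close>)
  have dAB: "A \<inter> B' = {}" unfolding A_def B'_def using disj by blast
  have cover: "A \<union> B' = topspace X - {x}"
  proof
    show "A \<union> B' \<subseteq> topspace X - {x}" unfolding A_def B'_def using piece_top piece_clop by blast
    show "topspace X - {x} \<subseteq> A \<union> B'"
    proof
      fix y assume y: "y \<in> topspace X - {x}"
      have cx: "closedin X {x}" using Hausdorff_imp_t1_space[OF H, unfolded t1_space_closedin_singleton] xt by blast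
      have "openin X (topspace X - {x})" using cx by blast
      then obtain c where c: "clopenin X c" "y \<in> c" "c \<subseteq> topspace X - {x}"
        using zd y unfolding zero_dimensional_def by blast
      have "c \<in> e ` K" using c(1) e unfolding Clop_def by simp
      then obtain k where k: "k \<in> K" "c = e k" by blast
      have "goal k (h k)" using hgoal exist k(1) by blast
      hence "c \<subseteq> fst (h k) \<union> snd (h k)" using c k unfolding goal_def by auto
      thus "y \<in> A \<union> B'" using c k unfolding A_def B'_def by blast
    qed
  qed
  have inclA: "x \<in> X closure_of A" and inclB: "x \<in> X closure_of B'"
  proof -
    have "\<exists>k\<in>K. fst (h k) \<inter> T \<noteq> {} \<and> snd (h k) \<inter> T \<noteq> {}" if T: "x \<in> T" "openin X T" for T
    proof -
      obtain c where c: "clopenin X c" "x \<in> c" "c \<subseteq> T" using zd T unfolding zero_dimensional_def by blast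
      have "c \<in> e ` K" using c(1) e unfolding Clop_def by simp
      then obtain k where k: "k \<in> K" "c = e k" by blast
      have "goal k (h k)" using hgoal exist k(1) by blast
      thus ?thesis using c k unfolding goal_def by blast
    qed
    thus "x \<in> X closure_of A" "x \<in> X closure_of B'"
      unfolding in_closure_of A_def B'_def using xt by blast+
  qed
  have "X closure_of A \<inter> X closure_of B' = {x}"
  proof
    have "B' \<inter> X closure_of A = {}" using openin_Int_closure_of_eq_empty[OF oB, of A] dAB by (simp add: Int_commute)
    moreover have "A \<inter> X closure_of B' = {}" using openin_Int_closure_of_eq_empty[OF oA, of B'] dAB by simp
    moreover have "X closure_of A \<subseteq> topspace X" by (rule closure_of_subset_topspace)
    ultimately show "X closure_of A \<inter> X closure_of B' \<subseteq> {x}" using cover by blast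
    show "{x} \<subseteq> X closure_of A \<inter> X closure_of B'" using inclA inclB by blast
  qed
  thus ?thesis unfolding strong_butterfly_point_def using oA oB dAB cover by blast
qed

end
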